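(* Let $0<m\le n$ and let $S\subset\Delta^n$ be the union of $m$ of the codimension-one faces of the $n$-simplex $\Delta^n$. Then the inclusion $S\hookrightarrow\Delta^n$ is an $m$-expansion.
   Context: $\Lambda^p_i=\bigcup_{j\ne i}\partial_j\Delta^p$ is the horn. For $m>0$, an inclusion of simplicial sets $S\hookrightarrow T$ is an $m$-expansion if there is a filtration $S=F_{-1}T\subset F_0T\subset F_1T\subset\cdots$ with $T=\bigcup_\ell F_\ell T$, a weakly monotone sequence $n_\ell\ge m$ ($\ell\ge0$), indices $0\le i_\ell\le n_\ell$, and maps $x_\ell:\Delta^{n_\ell}\to F_\ell T$, $y_\ell:\Lambda^{n_\ell}_{i_\ell}\to F_{\ell-1}T$ making $F_\ell T$ the pushout of $F_{\ell-1}T\leftarrow\Lambda^{n_\ell}_{i_\ell}\hookrightarrow\Delta^{n_\ell}$. *)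

theory Defs
  imports Main "HOL-Library.Extended_Nat"
begin

text \<open>A k-simplex of Delta^p is a weakly increasing list [v0,...,vk] of vertices
  in {0..p} (i.e. a monotone map [k] -> [p]); its dimension is length - 1.\<close>

definition simplices :: "nat \<Rightarrow> nat list set" where
  "simplices p = {xs. xs \<noteq> [] \<and> sorted xs \<and> set xs \<subseteq> {0..p}}"

definition mono_map :: "nat \<Rightarrow> nat \<Rightarrow> (nat \<Rightarrow> nat) \<Rightarrow> bool" where
  "mono_map m k \<theta> \<longleftrightarrow> (\<forall>i j. i \<le> j \<and> j \<le> m \<longrightarrow> \<theta> i \<le> \<theta> j) \<and> (\<forall>i\<le>m. \<theta> i \<le> k)"

definition act :: "(nat \<Rightarrow> nat) \<Rightarrow> nat \<Rightarrow> nat list \<Rightarrow> nat list" where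
  "act \<theta> m xs = map (\<lambda>i. xs ! \<theta> i) [0..<Suc m]"

definition sub_sset :: "nat \<Rightarrow> nat list set \<Rightarrow> bool" where
  "sub_sset p X \<longleftrightarrow> X \<subseteq> simplices p \<and>
     (\<forall>xs\<in>X. \<forall>m \<theta>. mono_map m (length xs - 1) \<theta> \<longrightarrow> act \<theta> m xs \<in> X)"

definition ssmap :: "nat list set \<Rightarrow> nat list set \<Rightarrow> (nat list \<Rightarrow> nat list) \<Rightarrow> bool" where
  "ssmap A B f \<longleftrightarrow> (\<forall>xs\<in>A. f xs \<in> B \<and> length (f xs) = length xs) \<and>
     (\<forall>xs\<in>A. \<forall>m \<theta>. mono_map m (length xs - 1) \<theta> \<longrightarrow> f (act \<theta> m xs) = act \<theta> m (f xs))"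

definition face :: "nat \<Rightarrow> nat \<Rightarrow> nat list set" where
  "face p j = {xs \<in> simplices p. j \<notin> set xs}"

definition horn :: "nat \<Rightarrow> nat \<Rightarrow> nat list set" where
  "horn p i = (\<Union>j\<in>{0..p} - {i}. face p j)"

text \<open>Pushout square  C <-g- A \<subseteq> B -h-> P  with C \<subseteq> P the inclusion.
  Pushouts of simplicial sets are computed degreewise; in each degree the
  square is a pushout of sets iff the induced map from C \<Squnion> B onto P is
  surjective with kernel the equivalence relation generated by g a ~ a.
  (All maps preserve dimension, so stating it for all degrees at once is the
  same as stating it degreewise.)\<close>
definition is_pushout ::
  "nat list set \<Rightarrow> nat list set \<Rightarrow> nat list set \<Rightarrow> nat list set \<Rightarrow>
   (nat list \<Rightarrow> nat list) \<Rightarrow> (nat list \<Rightarrow> nat list) \<Rightarrow> bool" where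
  "is_pushout A B C P g h \<longleftrightarrow>
     A \<subseteq> B \<and> C \<subseteq> P \<and> (\<forall>a\<in>A. h a = g a) \<and> P = C \<union> h ` B \<and>
     (\<forall>u\<in>C <+> B. \<forall>v\<in>C <+> B.
        (case_sum id h u = case_sum id h v) \<longleftrightarrow>
        (u, v) \<in> ({(Inl (g a), Inr a) | a. a \<in> A} \<union> {(Inl (g a), Inr a) | a. a \<in> A}\<inverse>)\<^sup>*)"

text \<open>m-expansion S \<hookrightarrow> T for simplicial subsets S \<subseteq> T of Delta^p.
  The filtration is indexed by l < N with N \<in> enat (finite or infinite);
  F (l-1) is S for l = 0.\<close>
definition m_expansion :: "nat \<Rightarrow> nat \<Rightarrow> nat list set \<Rightarrow> nat list set \<Rightarrow> bool" where
  "m_expansion m p S T \<longleftrightarrow> 0 < m \<and> sub_sset p S \<and> sub_sset p T \<and> S \<subseteq> T \<and>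
    (\<exists>(N::enat) (F::nat \<Rightarrow> nat list set) (n::nat \<Rightarrow> nat) (i::nat \<Rightarrow> nat)
       (x::nat \<Rightarrow> nat list \<Rightarrow> nat list) (y::nat \<Rightarrow> nat list \<Rightarrow> nat list).
       let Fprev = (\<lambda>l. if l = 0 then S else F (l - 1)) in
       (\<forall>l. enat l < N \<longrightarrow>
          sub_sset p (F l) \<and> Fprev l \<subseteq> F l \<and>
          m \<le> n l \<and> i l \<le> n l \<and>
          (enat (Suc l) < N \<longrightarrow> n l \<le> n (Suc l)) \<and>
          ssmap (simplices (n l)) (F l) (x l) \<and>
          ssmap (horn (n l) (i l)) (Fprev l) (y l) \<and>
          is_pushout (horn (n l) (i l)) (simplices (n l)) (Fprev l) (F l) (y l) (x l)) \<and>
       T = S \<union> (\<Union>l\<in>{l. enat l < N}. F l))"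

end

theory Submission
  imports Defs
begin

definition es :: "nat set \<Rightarrow> nat \<Rightarrow> nat" where
  "es W i = sorted_list_of_set W ! i"

lemma es_mem: "finite W \<Longrightarrow> i < card W \<Longrightarrow> es W i \<in> W"
  unfolding es_def by (metis length_sorted_list_of_set nth_mem set_sorted_list_of_set)

lemma es_less: "finite W \<Longrightarrow> i < j \<Longrightarrow> j < card W \<Longrightarrow> es W i < es W j"
  unfolding es_def using sorted_wrt_nth_less[OF strict_sorted_list_of_set[of W]]
  by (simp add: length_sorted_list_of_set)

lemma es_le: "finite W \<Longrightarrow> i \<le> j \<Longrightarrow> j < card W \<Longrightarrow> es W i \<le> es W j"
  using es_less[of W i j] by (cases "i = j") auto

lemma es_inj: "finite W \<Longrightarrow> i < card W \<Longrightarrow> j < card W \<Longrightarrow> es W i = es W j \<Longrightarrow> i = j"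
  using es_less[of W i j] es_less[of W j i] by (metis less_irrefl nat_neq_iff)

lemma es_surj: "finite W \<Longrightarrow> v \<in> W \<Longrightarrow> \<exists>i<card W. es W i = v"
  unfolding es_def by (metis in_set_conv_nth length_sorted_list_of_set set_sorted_list_of_set)

definition esinv :: "nat set \<Rightarrow> nat \<Rightarrow> nat" where
  "esinv W v = (SOME i. i < card W \<and> es W i = v)"

lemma esinv: "finite W \<Longrightarrow> v \<in> W \<Longrightarrow> esinv W v < card W \<and> es W (esinv W v) = v"
  unfolding esinv_def using es_surj[of W v] by (metis (mono_tags, lifting) someI_ex)

lemma esinv_mono: "finite W \<Longrightarrow> v \<in> W \<Longrightarrow> w \<in> W \<Longrightarrow> v \<le> w \<Longrightarrow> esinv W v \<le> esinv W w"
  using esinv[of W v] esinv[of W w] es_less[of W "esinv W w" "esinv W v"]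
  by (metis leD le_less_linear)

lemma sorted_map_mono:
  "sorted ys \<Longrightarrow> set ys \<subseteq> W \<Longrightarrow> (\<forall>v\<in>W. \<forall>w\<in>W. v \<le> w \<longrightarrow> f v \<le> f w) \<Longrightarrow> sorted (map f ys)"
  by (induction ys) auto

lemma act_props:
  assumes "xs \<noteq> []" "mono_map m (length xs - 1) \<theta>"
  shows "set (act \<theta> m xs) \<subseteq> set xs" "act \<theta> m xs \<noteq> []"
    "sorted xs \<Longrightarrow> sorted (act \<theta> m xs)"
    "map e (act \<theta> m xs) = act \<theta> m (map e xs)"
proof -
  have lt: "\<And>i. i \<le> m \<Longrightarrow> \<theta> i < length xs" using assms unfolding mono_map_def
    by (metis One_nat_def Suc_pred le_imp_less_Suc length_greater_0_conv)
  show "set (act \<theta> m xs) \<subseteq> set xs" unfolding act_def using lt by auto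
  show "act \<theta> m xs \<noteq> []" unfolding act_def by simp
  show "map e (act \<theta> m xs) = act \<theta> m (map e xs)" unfolding act_def using lt by auto
  assume s: "sorted xs"
  show "sorted (act \<theta> m xs)" unfolding act_def sorted_iff_nth_mono
  proof (intro allI impI)
    fix i j assume ij: "i \<le> j" "j < length (map (\<lambda>i. xs ! \<theta> i) [0..<Suc m])"
    then have "\<theta> i \<le> \<theta> j" "\<theta> j < length xs" using assms(2) lt unfolding mono_map_def by auto
    then show "map (\<lambda>i. xs ! \<theta> i) [0..<Suc m] ! i \<le> map (\<lambda>i. xs ! \<theta> i) [0..<Suc m] ! j"
      using ij s sorted_nth_mono by (simp del: upt_Suc)
  qed
qed

lemma sub_sset_vset:
  assumes "\<And>A B. B \<subseteq> A \<Longrightarrow> Q A \<Longrightarrow> Q B"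
  shows "sub_sset n {xs \<in> simplices n. Q (set xs)}"
  unfolding sub_sset_def
proof (intro conjI ballI allI impI)
  fix xs m \<theta> assume xs: "xs \<in> {xs \<in> simplices n. Q (set xs)}" and mm: "mono_map m (length xs - 1) \<theta>"
  then have ne: "xs \<noteq> []" by (simp add: simplices_def)
  from act_props[OF ne mm] xs assms show "act \<theta> m xs \<in> {xs \<in> simplices n. Q (set xs)}"
    unfolding simplices_def by auto
qed auto

lemma pushout_crit:
  assumes "A \<subseteq> B" "C \<subseteq> P" "\<forall>a\<in>A. h a = g a" "g ` A \<subseteq> C" "P = C \<union> h ` B"
    "inj_on h (B - A)" "h ` (B - A) \<inter> C = {}"
  shows "is_pushout A B C P g h"
proof -
  define R where "R = {(Inl (g a), Inr a) | a. a \<in> A} \<union> {(Inl (g a), Inr a) | a. a \<in> A}\<inverse>"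
  define \<psi> where "\<psi> u = (case u of Inl c \<Rightarrow> Inl c | Inr a \<Rightarrow> if a \<in> A then Inl (g a) else Inr a)" for u :: "nat list + nat list"
  have ker: "\<psi> u = \<psi> v" if "(u, v) \<in> R\<^sup>*" for u v
    using that
  proof (induction rule: rtrancl_induct)
    case (step y z) then show ?case unfolding R_def \<psi>_def by auto
  qed simp
  have tops: "(u, \<psi> u) \<in> R\<^sup>*" for u
    unfolding \<psi>_def R_def by (cases u) auto
  have bk: "(u, v) \<in> R\<^sup>*" if "\<psi> u = \<psi> v" for u v
  proof -
    have "(\<psi> v, v) \<in> R\<^sup>*" unfolding \<psi>_def R_def by (cases v) auto
    then show ?thesis using tops[of u] that rtrancl_trans[of u "\<psi> u" R v] by simp
  qed
  have key: "case_sum id h u = case_sum id h v \<longleftrightarrow> \<psi> u = \<psi> v" if "u \<in> C <+> B" "v \<in> C <+> B" for u v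
  proof -
    have e1: "case_sum id h u = case_sum id h (\<psi> u)" if "u \<in> C <+> B" for u
      using that assms(3) unfolding \<psi>_def by (auto split: sum.split)
    have e2: "\<psi> u \<in> Inl ` C \<union> Inr ` (B - A)" if "u \<in> C <+> B" for u
      using that assms(4) unfolding \<psi>_def by (auto split: sum.split)
    have inj: "inj_on (case_sum id h) (Inl ` C \<union> Inr ` (B - A))"
      unfolding inj_on_def
    proof (intro ballI impI)
      fix x y assume x: "x \<in> Inl ` C \<union> Inr ` (B - A)" and y: "y \<in> Inl ` C \<union> Inr ` (B - A)"
        and eq: "case_sum id h x = case_sum id h y"
      show "x = y"
      proof (cases x)
        case (Inl a) note xa = this
        show ?thesis
        proof (cases y)
          case (Inl b) then show ?thesis using xa eq by simp
        next
          case (Inr b) then show ?thesis using xa eq x y assms(7) by auto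
        qed
      next
        case (Inr a) note xa = this
        show ?thesis
        proof (cases y)
          case (Inl b) then show ?thesis using xa eq x y assms(7) by auto
        next
          case (Inr b) then show ?thesis using xa eq x y assms(6) by (auto simp: inj_on_def)
        qed
      qed
    qed
    show ?thesis using e1[OF that(1)] e1[OF that(2)] e2[OF that(1)] e2[OF that(2)] inj
      by (metis inj_on_def)
  qed
  have "\<forall>u\<in>C <+> B. \<forall>v\<in>C <+> B. (case_sum id h u = case_sum id h v) \<longleftrightarrow> (u, v) \<in> R\<^sup>*"
    using key ker bk by blast
  then show ?thesis unfolding is_pushout_def R_def using assms(1,2,3,5) by blast
qed


theorem lemma3p8:
  fixes m n :: nat and J :: "nat set"
  assumes "0 < m" and "m \<le> n"
    and "J \<subseteq> {0..n}" and "card J = m"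
  shows "m_expansion m n (\<Union>j\<in>J. face n j) (simplices n)"
proof -
  have finJ: "finite J" using assms(1,4) card_ge_0_finite by blast
  have "J \<noteq> {0..n}" using assms(2,4) by auto
  then obtain k where k: "k \<in> {0..n}" "k \<notin> J" using assms(3) by blast
  define \<Sigma> where "\<Sigma> = {\<sigma>. J \<subseteq> \<sigma> \<and> \<sigma> \<subseteq> {0..n} - {k}}"
  have "finite \<Sigma>" unfolding \<Sigma>_def by (rule finite_subset[of _ "Pow {0..n}"]) auto
  then obtain L0 where L0: "set L0 = \<Sigma>" "distinct L0" using finite_distinct_list by blast
  define L where "L = sort_key card L0"
  have Lset: "set L = \<Sigma>" and Ldist: "distinct L" and Lsort: "sorted (map card L)"
    using L0 unfolding L_def by auto
  have Lmem: "L ! t \<in> \<Sigma>" if "t < length L" for t using Lset that nth_mem by blast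
  have Lfin: "finite (L ! t)" "k \<notin> L ! t" "J \<subseteq> L ! t" "L ! t \<subseteq> {0..n}" if "t < length L" for t
    using Lmem[OF that] unfolding \<Sigma>_def by (auto intro: finite_subset[of _ "{0..n}"])
  have Lcard: "card (L ! s) \<le> card (L ! t)" if "s \<le> t" "t < length L" for s t
    using sorted_nth_mono[OF Lsort, of s t] that by simp
  have Lidx: "\<exists>t<length L. L ! t = \<sigma>" if "\<sigma> \<in> \<Sigma>" for \<sigma>
    using that Lset by (metis in_set_conv_nth)
  define W where "W t = insert k (L ! t)" for t
  have Wfin: "finite (W t)" "card (W t) = Suc (card (L ! t))" if "t < length L" for t
    using Lfin[OF that] unfolding W_def by auto
  define S where "S = (\<Union>j\<in>J. face n j)"
  define G where "G t = {xs \<in> simplices n. (\<exists>j\<in>J. j \<notin> set xs) \<or> (\<exists>s<t. s < length L \<and> set xs \<subseteq> W s)}" for t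
  have G0: "G 0 = S" unfolding G_def S_def face_def by auto
  have Gsub: "sub_sset n (G t)" for t
    unfolding G_def by (rule sub_sset_vset) blast
  have Gmono: "G s \<subseteq> G t" if "s \<le> t" for s t using that unfolding G_def by fastforce
  define nn where "nn l = card (L ! l)" for l
  define ii where "ii l = esinv (W l) k" for l
  define x where "x l = map (es (W l))" for l
  define Fprev where "Fprev = (\<lambda>l. if l = 0 then S else G (Suc (l - 1)))"
  have Fprev: "Fprev l = G l" for l unfolding Fprev_def using G0 by auto
  have step: "sub_sset n (G (Suc l)) \<and> Fprev l \<subseteq> G (Suc l) \<and>
          m \<le> nn l \<and> ii l \<le> nn l \<and>
          (enat (Suc l) < enat (length L) \<longrightarrow> nn l \<le> nn (Suc l)) \<and>
          ssmap (simplices (nn l)) (G (Suc l)) (x l) \<and>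
          ssmap (horn (nn l) (ii l)) (Fprev l) (x l) \<and>
          is_pushout (horn (nn l) (ii l)) (simplices (nn l)) (Fprev l) (G (Suc l)) (x l) (x l)"
    if l: "l < length L" for l
  proof -
    define \<sigma> where "\<sigma> = L ! l"
    define d where "d = nn l"
    define E where "E = es (W l)"
    define i where "i = ii l"
    have fW: "finite (W l)" and cW: "card (W l) = Suc d" using Wfin[OF l] unfolding d_def nn_def by auto
    have kW: "k \<in> W l" unfolding W_def by simp
    have Ei: "E i = k" "i \<le> d" using esinv[OF fW kW] cW unfolding E_def i_def ii_def by auto
    have Emem: "E j \<in> W l" if "j \<le> d" for j using es_mem[OF fW] that cW unfolding E_def by auto
    have Einj: "j = j'" if "j \<le> d" "j' \<le> d" "E j = E j'" for j j'
      using es_inj[OF fW] that cW unfolding E_def by auto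
    have Emono: "E j \<le> E j'" if "j \<le> j'" "j' \<le> d" for j j'
      using es_le[OF fW] that cW unfolding E_def by auto
    have Esurj: "\<exists>j\<le>d. E j = v" if "v \<in> W l" for v
      using es_surj[OF fW that] cW unfolding E_def by (auto simp: less_Suc_eq_le)
    have Wsub: "W l \<subseteq> {0..n}" using Lfin[OF l] k unfolding W_def by auto
    have xl: "x l = map E" unfolding x_def E_def by simp
    have \<sigma>\<Sigma>: "J \<subseteq> \<sigma>" "k \<notin> \<sigma>" "finite \<sigma>" "\<sigma> \<subseteq> {0..n}" using Lfin[OF l] unfolding \<sigma>_def by auto
    have dcard: "d = card \<sigma>" unfolding d_def nn_def \<sigma>_def by simp
    have Wl: "W l = insert k \<sigma>" unfolding W_def \<sigma>_def by simp
    have img_in: "map E xs \<in> simplices n \<and> set (map E xs) \<subseteq> W l" if "xs \<in> simplices d" for xs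
    proof -
      have xs: "xs \<noteq> []" "sorted xs" "set xs \<subseteq> {0..d}" using that unfolding simplices_def by auto
      have "sorted (map E xs)" by (rule sorted_map_mono[OF xs(2) xs(3)]) (use Emono in auto)
      moreover have "set (map E xs) \<subseteq> W l" using xs(3) Emem by auto
      ultimately show ?thesis using xs Wsub unfolding simplices_def by auto
    qed
    have img: "map E ` simplices d = {ys \<in> simplices n. set ys \<subseteq> W l}"
    proof (intro equalityI subsetI)
      fix ys assume "ys \<in> map E ` simplices d" then show "ys \<in> {ys \<in> simplices n. set ys \<subseteq> W l}"
        using img_in by blast
    next
      fix ys assume ys: "ys \<in> {ys \<in> simplices n. set ys \<subseteq> W l}"
      define xs where "xs = map (esinv (W l)) ys"
      have ysp: "ys \<noteq> []" "sorted ys" "set ys \<subseteq> W l" using ys unfolding simplices_def by auto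
      have "sorted xs" unfolding xs_def using sorted_map_mono[OF ysp(2) ysp(3)] esinv_mono[OF fW] by auto
      moreover have "set xs \<subseteq> {0..d}" unfolding xs_def using esinv[OF fW] ysp(3) cW by fastforce
      moreover have "map E xs = ys" unfolding xs_def E_def using esinv[OF fW] ysp(3)
        by (simp add: map_idI subset_iff)
      ultimately show "ys \<in> map E ` simplices d" using ysp(1) unfolding simplices_def xs_def
        by (metis (mono_tags, lifting) Nil_is_map_conv image_eqI mem_Collect_eq)
    qed
    have Gsuc: "G (Suc l) = G l \<union> {ys \<in> simplices n. set ys \<subseteq> W l}"
      unfolding G_def using l by (auto simp: less_Suc_eq)
    have hornG: "map E xs \<in> G l" if hx: "xs \<in> horn d i" for xs
    proof -
      obtain j where j: "j \<in> {0..d} - {i}" "xs \<in> simplices d" "j \<notin> set xs"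
        using hx unfolding horn_def face_def by blast
      have xsd: "set xs \<subseteq> {0..d}" using j(2) unfolding simplices_def by auto
      have ii2: "map E xs \<in> simplices n" "set (map E xs) \<subseteq> W l" using img_in[OF j(2)] by auto
      define v where "v = E j"
      have vk: "v \<noteq> k" using Einj[of j i] j Ei unfolding v_def by auto
      have vW: "v \<in> W l" using Emem j unfolding v_def by auto
      have vnot: "v \<notin> set (map E xs)"
      proof
        assume "v \<in> set (map E xs)"
        then obtain j' where j': "j' \<in> set xs" "E j' = E j" unfolding v_def by auto
        have "j' \<le> d" "j \<le> d" using j'(1) xsd j(1) by auto
        then have "j' = j" using Einj j'(2) by blast
        then show False using j' j(3) by simp
      qed
      show ?thesis
      proof (cases "v \<in> J")
        case True then show ?thesis using vnot ii2 unfolding G_def by auto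
      next
        case False
        define \<tau> where "\<tau> = \<sigma> - {v}"
        have v\<sigma>: "v \<in> \<sigma>" using vW vk Wl by auto
        have "\<tau> \<in> \<Sigma>" unfolding \<tau>_def \<Sigma>_def using \<sigma>\<Sigma> False by auto
        then obtain s where s: "s < length L" "L ! s = \<tau>" using Lidx by blast
        have ct: "card \<tau> < card \<sigma>" unfolding \<tau>_def by (rule card_Diff1_less[OF \<sigma>\<Sigma>(3) v\<sigma>])
        have "s < l" using Lcard[of l s] s l ct \<sigma>_def by (metis leD le_less_linear)
        moreover have "set (map E xs) \<subseteq> W s" using ii2 vnot Wl s(2) unfolding W_def \<tau>_def by auto
        ultimately show ?thesis using ii2 s(1) unfolding G_def by auto
      qed
    qed
    have hsub: "horn d i \<subseteq> simplices d" unfolding horn_def face_def by auto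
    have ssm: "ssmap A B (map E)" if "A \<subseteq> simplices d" "\<And>xs. xs \<in> A \<Longrightarrow> map E xs \<in> B" for A B
      unfolding ssmap_def
    proof (intro conjI ballI allI impI)
      fix xs m \<theta> assume "xs \<in> A" "mono_map m (length xs - 1) \<theta>"
      then show "map E (act \<theta> m xs) = act \<theta> m (map E xs)"
        using act_props(4) that(1) unfolding simplices_def by blast
    qed (use that in auto)
    have disj: "map E ` (simplices d - horn d i) \<inter> G l = {}"
    proof (rule ccontr)
      assume "map E ` (simplices d - horn d i) \<inter> G l \<noteq> {}"
      then obtain b where b: "b \<in> simplices d" "b \<notin> horn d i" "map E b \<in> G l" by auto
      have allj: "j \<in> set b" if "j \<le> d" "j \<noteq> i" for j
        using b(1,2) that unfolding horn_def face_def by auto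
      have \<sigma>in: "\<sigma> \<subseteq> set (map E b)"
      proof
        fix v assume v: "v \<in> \<sigma>"
        then obtain j where j: "j \<le> d" "E j = v" using Esurj Wl by auto
        have "j \<noteq> i" using j Ei v \<sigma>\<Sigma>(2) by auto
        then show "v \<in> set (map E b)" using allj j by auto
      qed
      then have "\<not> (\<exists>j\<in>J. j \<notin> set (map E b))" using \<sigma>\<Sigma>(1) by auto
      then obtain s where s: "s < l" "set (map E b) \<subseteq> W s" using b(3) unfolding G_def by auto
      have sl: "s < length L" using s l by auto
      have "\<sigma> \<subseteq> L ! s" using \<sigma>in s(2) \<sigma>\<Sigma>(2) unfolding W_def by auto
      moreover have "card (L ! s) \<le> card \<sigma>" using Lcard[of s l] s l \<sigma>_def by auto
      ultimately have "\<sigma> = L ! s" using Lfin[OF sl] by (simp add: card_seteq)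
      then show False using Ldist s sl l \<sigma>_def nth_eq_iff_index_eq by fastforce
    qed
    have inj: "inj_on (map E) (simplices d - horn d i)"
      unfolding inj_on_def
    proof (intro ballI impI)
      fix a b assume "a \<in> simplices d - horn d i" "b \<in> simplices d - horn d i" "map E a = map E b"
      moreover have "inj_on E {0..d}" using Einj unfolding inj_on_def by auto
      ultimately show "a = b" using inj_on_map_eq_map[of E a b] unfolding simplices_def
        by (metis (no_types, lifting) DiffD1 inj_on_subset le_sup_iff mem_Collect_eq)
    qed
    have po: "is_pushout (horn d i) (simplices d) (G l) (G (Suc l)) (map E) (map E)"
      by (rule pushout_crit) (use hsub Gmono hornG Gsuc img inj disj in auto)
    have md: "m \<le> d" using card_mono[OF \<sigma>\<Sigma>(3) \<sigma>\<Sigma>(1)] assms(4) dcard by simp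
    have mono: "nn l \<le> nn (Suc l)" if "Suc l < length L" using Lcard[of l "Suc l"] that unfolding nn_def by simp
    have s1: "ssmap (simplices d) (G (Suc l)) (map E)"
      by (rule ssm[OF order_refl]) (use img_in Gsuc in auto)
    have s2: "ssmap (horn d i) (G l) (map E)" by (rule ssm[OF hsub]) (rule hornG)
    have mono': "d \<le> nn (Suc l)" if "Suc l < length L" using mono[OF that] d_def by simp
    show ?thesis
      unfolding Fprev xl d_def[symmetric] i_def[symmetric]
      using Gsub[of "Suc l"] Gmono[of l "Suc l"] md Ei(2) mono' po s1 s2
      by simp
  qed
  have cover: "simplices n = S \<union> (\<Union>l\<in>{l. enat l < enat (length L)}. G (Suc l))"
  proof (intro equalityI subsetI)
    fix xs assume xs: "xs \<in> simplices n"
    show "xs \<in> S \<union> (\<Union>l\<in>{l. enat l < enat (length L)}. G (Suc l))"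
    proof (cases "\<exists>j\<in>J. j \<notin> set xs")
      case True then show ?thesis using xs unfolding S_def face_def by auto
    next
      case False
      have "set xs - {k} \<in> \<Sigma>" using False xs k unfolding \<Sigma>_def simplices_def by auto
      then obtain t where t: "t < length L" "L ! t = set xs - {k}" using Lidx by blast
      have "xs \<in> G (Suc t)" using xs t unfolding G_def W_def by auto
      then show ?thesis using t by auto
    qed
  next
    fix xs assume "xs \<in> S \<union> (\<Union>l\<in>{l. enat l < enat (length L)}. G (Suc l))"
    then show "xs \<in> simplices n" unfolding S_def face_def G_def by auto
  qed
  have subS: "sub_sset n S" using Gsub[of 0] G0 by simp
  have subT: "sub_sset n (simplices n)"
    using sub_sset_vset[of "\<lambda>_. True" n] by simp
  have ST: "S \<subseteq> simplices n" unfolding S_def face_def by blast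
  have ex: "\<exists>(N::enat) (F::nat \<Rightarrow> nat list set) (n'::nat \<Rightarrow> nat) (i::nat \<Rightarrow> nat)
       (x::nat \<Rightarrow> nat list \<Rightarrow> nat list) (y::nat \<Rightarrow> nat list \<Rightarrow> nat list).
       let Fprev = (\<lambda>l. if l = 0 then S else F (l - 1)) in
       (\<forall>l. enat l < N \<longrightarrow>
          sub_sset n (F l) \<and> Fprev l \<subseteq> F l \<and>
          m \<le> n' l \<and> i l \<le> n' l \<and>
          (enat (Suc l) < N \<longrightarrow> n' l \<le> n' (Suc l)) \<and>
          ssmap (simplices (n' l)) (F l) (x l) \<and>
          ssmap (horn (n' l) (i l)) (Fprev l) (y l) \<and>
          is_pushout (horn (n' l) (i l)) (simplices (n' l)) (Fprev l) (F l) (y l) (x l)) \<and>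
       simplices n = S \<union> (\<Union>l\<in>{l. enat l < N}. F l)"
    apply (rule exI[of _ "enat (length L)"], rule exI[of _ "\<lambda>l. G (Suc l)"], rule exI[of _ nn],
        rule exI[of _ ii], rule exI[of _ x], rule exI[of _ x])
    unfolding Let_def Fprev_def[symmetric]
    using step cover by auto
  show ?thesis
    unfolding m_expansion_def S_def[symmetric]
    using assms(1) subS subT ST ex by blast
qed

end
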